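(* Let $f:\mathbb{R}^d\to\mathbb{R}$ be convex and $L$-smooth and let $\gamma>0$. Consider the iterates $z_0=x_0\in\mathbb{R}^d$ and, for $k\ge0$, $$y_k=(1-c_{k+1})x_k+c_{k+1}z_k,\qquad z_{k+1}=z_k-\rho_k\nabla f(y_k),\qquad x_{k+1}=(1-c_{k+1})x_k+c_{k+1}z_{k+1},$$ with $c_{k+1}=\frac{2}{k+2}$ and $\rho_k=\frac{k+1}{\gamma L}$. Then for every $k\ge0$, $$-f(y_k)\le -f(x_{k+1})-2L\left(\frac{\gamma}{(k+1)^{\overline{2}}}-\frac{1}{(k+2)^2}\right)\|z_{k+1}-z_k\|^2,$$ where $(k+1)^{\overline 2}=(k+1)(k+2)$.
   Context: $L$-smooth means $f$ is differentiable and $\|\nabla f(x)-\nabla f(y)\|\le L\|x-y\|$ for all $x,y$. *)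

theory Defs
  imports "HOL-Analysis.Analysis"
begin

definition L_smooth :: "real \<Rightarrow> ('a::euclidean_space \<Rightarrow> real) \<Rightarrow> ('a \<Rightarrow> 'a) \<Rightarrow> bool" where
  "L_smooth L f grad \<longleftrightarrow>
     (\<forall>x. (f has_derivative (\<lambda>h. grad x \<bullet> h)) (at x)) \<and>
     (\<forall>x y. norm (grad x - grad y) \<le> L * norm (x - y))"

end

theory Submission
  imports Defs
begin

lemma descent:
  fixes f :: "'a::euclidean_space \<Rightarrow> real" and grad :: "'a \<Rightarrow> 'a"
  assumes smooth: "L_smooth L f grad"
  shows "f (y + h) \<le> f y + grad y \<bullet> h + L / 2 * (norm h)^2"
proof -
  have D: "\<And>x. (f has_derivative (\<lambda>v. grad x \<bullet> v)) (at x)"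
    and Lip: "\<And>x y. norm (grad x - grad y) \<le> L * norm (x - y)"
    using smooth unfolding L_smooth_def by auto
  define g where "g t = f (y + t *\<^sub>R h) - t * (grad y \<bullet> h) - L / 2 * t^2 * (norm h)^2" for t :: real
  have "g 1 \<le> g 0"
  proof (rule DERIV_nonpos_imp_nonincreasing[where f = g])
    fix t :: real assume t0: "0 \<le> t" and t1: "t \<le> 1"
    have t: "0 \<le> t" using t0 .
    have d1: "((\<lambda>t. y + t *\<^sub>R h) has_derivative (\<lambda>s. s *\<^sub>R h)) (at t)"
      by (auto intro!: derivative_eq_intros)
    have "((\<lambda>t. f (y + t *\<^sub>R h)) has_derivative (\<lambda>s. grad (y + t *\<^sub>R h) \<bullet> (s *\<^sub>R h))) (at t)"
      using has_derivative_compose[OF d1 D] by simp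
    then have d2: "((\<lambda>t. f (y + t *\<^sub>R h)) has_real_derivative (grad (y + t *\<^sub>R h) \<bullet> h)) (at t)"
      unfolding has_field_derivative_def
      by (simp add: mult.commute[of _ "grad (y + t *\<^sub>R h) \<bullet> h"])
    have dg: "(g has_real_derivative (grad (y + t *\<^sub>R h) \<bullet> h - grad y \<bullet> h - L * t * (norm h)^2)) (at t)"
      unfolding g_def
      by (rule derivative_eq_intros d2 | simp)+
    have "grad (y + t *\<^sub>R h) \<bullet> h - grad y \<bullet> h = (grad (y + t *\<^sub>R h) - grad y) \<bullet> h"
      by (simp add: inner_diff_left)
    also have "\<dots> \<le> norm (grad (y + t *\<^sub>R h) - grad y) * norm h"
      by (rule norm_cauchy_schwarz)
    also have "\<dots> \<le> L * norm (t *\<^sub>R h) * norm h"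
      using Lip[of "y + t *\<^sub>R h" y] by (simp add: mult_right_mono)
    also have "\<dots> = L * t * (norm h)^2" using t by (simp add: power2_eq_square)
    finally show "\<exists>y. (g has_real_derivative y) (at t) \<and> y \<le> 0"
      using dg by (intro exI[of _ "grad (y + t *\<^sub>R h) \<bullet> h - grad y \<bullet> h - L * t * (norm h)^2"]) auto
  qed simp
  then show ?thesis unfolding g_def by simp
qed

theorem lemma22:
  fixes f :: "'a::euclidean_space \<Rightarrow> real" and grad :: "'a \<Rightarrow> 'a"
    and L \<gamma> :: real and x y z :: "nat \<Rightarrow> 'a" and c \<rho> :: "nat \<Rightarrow> real"
  assumes cvx: "convex_on UNIV f"
    and smooth: "L_smooth L f grad"
    and Lpos: "L > 0"
    and gpos: "\<gamma> > 0"
    and c_def: "\<And>k. c (k + 1) = 2 / (real k + 2)"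
    and rho_def: "\<And>k. \<rho> k = (real k + 1) / (\<gamma> * L)"
    and z0: "z 0 = x 0"
    and y_def: "\<And>k. y k = (1 - c (k + 1)) *\<^sub>R x k + c (k + 1) *\<^sub>R z k"
    and z_step: "\<And>k. z (k + 1) = z k - \<rho> k *\<^sub>R grad (y k)"
    and x_step: "\<And>k. x (k + 1) = (1 - c (k + 1)) *\<^sub>R x k + c (k + 1) *\<^sub>R z (k + 1)"
  shows "- f (y k) \<le> - f (x (k + 1))
           - 2 * L * (\<gamma> / ((real k + 1) * (real k + 2)) - 1 / (real k + 2)^2)
               * (norm (z (k + 1) - z k))^2"
proof -
  define d where "d = z (k + 1) - z k"
  define C where "C = c (k + 1)"
  define R where "R = \<rho> k"
  have C: "C = 2 / (real k + 2)" using c_def C_def by simp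
  have R: "R = (real k + 1) / (\<gamma> * L)" using rho_def R_def by simp
  have Rpos: "R > 0" using R Lpos gpos by simp
  have xy: "x (k + 1) = y k + C *\<^sub>R d"
    unfolding x_step y_def d_def C_def by (simp add: algebra_simps)
  have gd: "grad (y k) = - (1 / R) *\<^sub>R d"
    using z_step[of k] Rpos unfolding d_def R_def by simp
  have "f (x (k + 1)) \<le> f (y k) + grad (y k) \<bullet> (C *\<^sub>R d) + L / 2 * (norm (C *\<^sub>R d))^2"
    unfolding xy by (rule descent[OF smooth])
  also have "grad (y k) \<bullet> (C *\<^sub>R d) = - (C / R) * (norm d)^2"
    unfolding gd by (simp add: power2_norm_eq_inner)
  also have "(norm (C *\<^sub>R d))^2 = C^2 * (norm d)^2"
    by (simp add: power_mult_distrib)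
  finally have A: "f (x (k + 1)) \<le> f (y k) - (C / R) * (norm d)^2 + L / 2 * (C^2 * (norm d)^2)" by simp
  have e1: "(C / R) * (norm d)^2 = 2 * L * (\<gamma> / ((real k + 1) * (real k + 2))) * (norm d)^2"
    unfolding C R using Lpos gpos by (simp add: field_simps)
  have e2: "L / 2 * (C^2 * (norm d)^2) = 2 * L * (1 / (real k + 2)^2) * (norm d)^2"
    unfolding C by (simp add: field_simps power2_eq_square)
  have "f (x (k + 1)) \<le> f (y k) - 2 * L * (\<gamma> / ((real k + 1) * (real k + 2)) - 1 / (real k + 2)^2) * (norm d)^2"
    using A unfolding e1 e2 by (simp add: algebra_simps)
  then show ?thesis unfolding d_def by simp
qed

end
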